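(* Let $A$ be a real $2\times 2$ matrix and $B$ a real $1\times 2$ matrix, and let $\mathrm{NT}=\{\vec{x}\in\mathbb{R}^2 : BA^k\vec{x}>0 \text{ for all integers } k\ge 0\}$. Suppose $A$ has a positive eigenvalue $\lambda_1$ and a negative eigenvalue $\lambda_2$ with $\lambda_1\ge|\lambda_2|$, with eigenvectors $\vec{\beta}_1,\vec{\beta}_2$ respectively, such that $B\vec{\beta}_1>0$ and $B\vec{\beta}_2>0$. Let $\vec{\alpha}\in\mathbb{R}^2$ satisfy $B\vec{\alpha}=0$ and $BA\vec{\alpha}>0$, and let $\vec{\alpha}_{-1}=A^{-1}\vec{\alpha}$. Then $\mathrm{NT}=\{k_1\vec{\alpha}+k_2\vec{\alpha}_{-1}: k_1>0,\ k_2>0\}$.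
   Context: $\mathrm{NT}$ is the non-termination set of the loop "while $(B\vec{x}>0)$ $\{\vec{x}:=A\vec{x}\}$". *)

theory Defs
  imports "HOL-Analysis.Analysis"
begin

definition matpow :: "real^'n^'n \<Rightarrow> nat \<Rightarrow> real^'n^'n" where
  "matpow A k = ((\<lambda>M. A ** M) ^^ k) (mat 1)"

text \<open>Non-termination set of the loop  while (B x > 0) { x := A x },
  B a 1 x n matrix: NT = { x. for all k \<ge> 0, B A^k x > 0 }.\<close>
definition NT :: "real^'n^'n \<Rightarrow> real^'n^1 \<Rightarrow> (real^'n) set" where
  "NT A B = {x. \<forall>k::nat. (B *v (matpow A k *v x)) $ 1 > 0}"

end

theory Submission
  imports Defs
begin

lemma matpow_eig:
  fixes A :: "real^'n^'n"
  assumes "A *v b = l *\<^sub>R b"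
  shows "matpow A k *v b = (l ^ k) *\<^sub>R b"
proof (induction k)
  case 0
  then show ?case by (simp add: matpow_def)
next
  case (Suc k)
  have "matpow A (Suc k) = A ** matpow A k" by (simp add: matpow_def)
  then have "matpow A (Suc k) *v b = A *v (matpow A k *v b)"
    by (simp add: matrix_vector_mul_assoc)
  also have "\<dots> = (l ^ Suc k) *\<^sub>R b" using Suc assms
    by (simp add: matrix_vector_mult_scaleR)
  finally show ?case .
qed

lemma posk:
  fixes u v l1 m :: real
  assumes "l1 > 0" "m > 0" "l1 \<ge> m" "u + v > 0" "u * l1 - v * m > 0"
  shows "u * l1 ^ k + v * (- m) ^ k > 0"
proof (cases "even k")
  case True
  then have e: "(-m)^k = m^k" by simp
  have mk: "m^k \<le> l1^k" using assms by (simp add: power_mono)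
  have mk0: "m^k > 0" "l1^k > 0" using assms by auto
  show ?thesis
  proof (cases "v \<ge> 0")
    case True
    have "v * m \<ge> 0" using True assms by simp
    then have "u * l1 > 0" using assms by linarith
    then have "u > 0" using assms by (simp add: zero_less_mult_iff)
    then have "u * l1^k > 0" using mk0 by simp
    moreover have "v * m^k \<ge> 0" using True mk0 by simp
    ultimately show ?thesis unfolding e by linarith
  next
    case False
    have "v * m^k \<ge> v * l1^k" using False mk by (simp add: mult_le_cancel_left)
    moreover have "(u+v) * l1^k > 0" using assms mk0 by simp
    ultimately show ?thesis unfolding e by (simp add: algebra_simps)
  qed
next
  case False
  then obtain j where k: "k = Suc (2*j)" by (metis oddE Suc_eq_plus1)
  have e: "(-m)^k = - (m * m^(2*j))" using k by simp
  have e2: "l1^k = l1 * l1^(2*j)" using k by simp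
  have mk: "m^(2*j) \<le> l1^(2*j)" using assms by (simp add: power_mono)
  have mk0: "m^(2*j) > 0" "l1^(2*j) > 0" using assms by auto
  show ?thesis
  proof (cases "v \<ge> 0")
    case True
    have "v * m \<ge> 0" using True assms by simp
    then have "(v * m) * m^(2*j) \<le> (v * m) * l1^(2*j)" using mk
      by (simp add: mult_left_mono)
    moreover have "(u * l1 - v * m) * l1^(2*j) > 0" using assms mk0 by simp
    ultimately show ?thesis unfolding e e2 by (simp add: algebra_simps)
  next
    case False
    then have "u > 0" using assms by linarith
    then have "u * (l1 * l1^(2*j)) > 0" using mk0 assms by simp
    moreover have "v * (m * m^(2*j)) < 0" using False mk0 assms by (simp add: mult_neg_pos)
    ultimately show ?thesis unfolding e e2 by linarith
  qed
qed

lemma s12: fixes u v l1 l2 U w :: real assumes "U \<noteq> 0" "l1 > 0" "l2 < 0" "w = 1 / (U * (l1 - l2))"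
  shows "(u * l1 + v * l2) * w + (- ((u+v)*l1*l2) * w) / l1 = u / U"
    and "(u * l1 + v * l2) * w + (- ((u+v)*l1*l2) * w) / l2 = - v / U"
proof -
  have n: "l1 - l2 \<noteq> 0" "l1 \<noteq> 0" "l2 \<noteq> 0" using assms by auto
  have wl: "w * (l1 - l2) = 1 / U" using assms(4) n by simp
  have "(- ((u+v)*l1*l2) * w) / l1 = - ((u+v)*l2) * w" using n by simp
  then have "(u * l1 + v * l2) * w + (- ((u+v)*l1*l2) * w) / l1 = u * (w * (l1 - l2))"
    by (simp add: algebra_simps)
  then show "(u * l1 + v * l2) * w + (- ((u+v)*l1*l2) * w) / l1 = u / U" using wl by simp
  have "(- ((u+v)*l1*l2) * w) / l2 = - ((u+v)*l1) * w" using n by simp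
  then have "(u * l1 + v * l2) * w + (- ((u+v)*l1*l2) * w) / l2 = - v * (w * (l1 - l2))"
    by (simp add: algebra_simps)
  then show "(u * l1 + v * l2) * w + (- ((u+v)*l1*l2) * w) / l2 = - v / U" using wl by simp
qed

theorem lemma9:
  fixes A :: "real^2^2" and B :: "real^2^1"
    and l1 l2 :: real and b1 b2 \<alpha> :: "real^2"
  assumes "l1 > 0" and "l2 < 0" and "l1 \<ge> \<bar>l2\<bar>"
    and "b1 \<noteq> 0" and "A *v b1 = l1 *\<^sub>R b1"
    and "b2 \<noteq> 0" and "A *v b2 = l2 *\<^sub>R b2"
    and "(B *v b1) $ 1 > 0" and "(B *v b2) $ 1 > 0"
    and "(B *v \<alpha>) $ 1 = 0" and "(B *v (A *v \<alpha>)) $ 1 > 0"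
  shows "NT A B = {k1 *\<^sub>R \<alpha> + k2 *\<^sub>R (matrix_inv A *v \<alpha>) | k1 k2. k1 > 0 \<and> k2 > 0}"
proof -
  note a = assms
  define f where "f x = (B *v x) $ 1" for x
  have flin: "f (c *\<^sub>R x + d *\<^sub>R y) = c * f x + d * f y" for c d x y
    by (simp add: f_def matrix_vector_right_distrib matrix_vector_mult_scaleR)
  define p where "p = f b1"
  define q where "q = f b2"
  have p: "p > 0" and q: "q > 0" using a by (auto simp: p_def q_def f_def)
  define d where "d = b1$1 * b2$2 - b1$2 * b2$1"
  have d: "d \<noteq> 0"
  proof
    assume d0: "d = 0"
    obtain t where t: "b2 = t *\<^sub>R b1"
    proof (cases "b1$1 = 0")
      case True
      then have "b1$2 \<noteq> 0" using a(4) by (metis vec_eq_iff exhaust_2 zero_index)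
      moreover have "b2$1 = 0" using d0 True \<open>b1$2 \<noteq> 0\<close> by (simp add: d_def)
      ultimately show ?thesis using True
        by (intro that[of "b2$2 / b1$2"]) (simp add: vec_eq_iff forall_2)
    next
      case False
      have "b1$1 * b2$2 = b1$2 * b2$1" using d0 by (simp add: d_def)
      then have "b2$2 = b2$1 / b1$1 * b1$2" using False by (simp add: field_simps)
      then show ?thesis using False
        by (intro that[of "b2$1 / b1$1"]) (simp add: vec_eq_iff forall_2)
    qed
    have "A *v b2 = l1 *\<^sub>R b2" using t a(5) by (simp add: matrix_vector_mult_scaleR)
    then have "l1 *\<^sub>R b2 = l2 *\<^sub>R b2" using a(7) by metis
    then show False using a(1,2,6) by auto
  qed
  have basis: "\<exists>c1 c2. x = c1 *\<^sub>R b1 + c2 *\<^sub>R b2" for x :: "real^2"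
  proof (intro exI)
    show "x = ((x$1 * b2$2 - x$2 * b2$1)/d) *\<^sub>R b1 + ((b1$1 * x$2 - b1$2 * x$1)/d) *\<^sub>R b2"
    proof -
      have h1: "(x$1 * b2$2 - x$2 * b2$1) * b1$1 + (b1$1 * x$2 - b1$2 * x$1) * b2$1 = x$1 * d"
        by (simp add: d_def algebra_simps)
      have e1: "((x$1 * b2$2 - x$2 * b2$1)/d) * b1$1 + ((b1$1 * x$2 - b1$2 * x$1)/d) * b2$1 = x$1"
        using d h1 by (simp add: field_simps)
      have h2: "(x$1 * b2$2 - x$2 * b2$1) * b1$2 + (b1$1 * x$2 - b1$2 * x$1) * b2$2 = x$2 * d"
        by (simp add: d_def algebra_simps)
      have e2: "((x$1 * b2$2 - x$2 * b2$1)/d) * b1$2 + ((b1$1 * x$2 - b1$2 * x$1)/d) * b2$2 = x$2"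
        using d h2 by (simp add: field_simps)
      show ?thesis unfolding vec_eq_iff forall_2 using e1 e2 by simp
    qed
  qed
  have fk: "f (matpow A k *v (c1 *\<^sub>R b1 + c2 *\<^sub>R b2)) = c1 * p * l1^k + c2 * q * l2^k" for k c1 c2
  proof -
    have "matpow A k *v (c1 *\<^sub>R b1 + c2 *\<^sub>R b2) = (c1*l1^k) *\<^sub>R b1 + (c2*l2^k) *\<^sub>R b2"
      by (simp add: matrix_vector_right_distrib matrix_vector_mult_scaleR matpow_eig[OF a(5)] matpow_eig[OF a(7)])
    then have "f (matpow A k *v (c1 *\<^sub>R b1 + c2 *\<^sub>R b2)) = (c1*l1^k) * p + (c2*l2^k) * q"
      by (simp only: flin p_def q_def)
    then show ?thesis by (simp add: algebra_simps)
  qed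
  obtain a1 a2 where al: "\<alpha> = a1 *\<^sub>R b1 + a2 *\<^sub>R b2" using basis by blast
  define U where "U = a1 * p"
  have f0: "f \<alpha> = 0" using a(10) by (simp add: f_def)
  have "f (matpow A 0 *v \<alpha>) = 0" using f0 by (simp add: matpow_def)
  then have aq: "a2 * q = - U" using fk[of 0 a1 a2] al by (simp add: U_def)
  have "f (matpow A 1 *v \<alpha>) > 0" using a(11) by (simp add: matpow_def f_def)
  then have "U * l1 - U * l2 > 0" using fk[of 1 a1 a2] al aq by (simp add: U_def algebra_simps)
  then have "U * (l1 - l2) > 0" by (simp add: algebra_simps)
  then have U: "U > 0" using a(1,2) by (simp add: zero_less_mult_iff)
  define y where "y = (a1 / l1) *\<^sub>R b1 + (a2 / l2) *\<^sub>R b2"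
  have Ay: "A *v y = \<alpha>" using a(1,2,5,7) al
    by (simp add: y_def matrix_vector_right_distrib matrix_vector_mult_scaleR)
  have "surj (\<lambda>x. A *v x)"
  proof -
    { fix x :: "real^2"
      obtain c1 c2 where "x = c1 *\<^sub>R b1 + c2 *\<^sub>R b2" using basis by blast
      then have "x = A *v ((c1/l1) *\<^sub>R b1 + (c2/l2) *\<^sub>R b2)" using a(1,2,5,7)
        by (simp add: matrix_vector_right_distrib matrix_vector_mult_scaleR)
      then have "x \<in> range (\<lambda>x. A *v x)" by blast }
    then show ?thesis by blast
  qed
  then have inv: "invertible A"
    using matrix_right_invertible_surjective invertible_right_inverse by blast
  then have "matrix_inv A ** A = mat 1"
    unfolding invertible_def matrix_inv_def by (rule someI2_ex) auto
  then have iy: "matrix_inv A *v \<alpha> = y"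
    using Ay by (metis matrix_vector_mul_assoc matrix_vector_mul_lid)
  have y2: "y = (a1 / l1) *\<^sub>R b1 + (a2 / l2) *\<^sub>R b2" by (simp add: y_def)
  define m where "m = - l2"
  have m: "m > 0" "l1 \<ge> m" using a(2,3) by (auto simp: m_def)
  show ?thesis
  proof (rule set_eqI, rule iffI)
    fix x assume xn: "x \<in> NT A B"
    obtain c1 c2 where x: "x = c1 *\<^sub>R b1 + c2 *\<^sub>R b2" using basis by blast
    define u where "u = c1 * p"
    define v where "v = c2 * q"
    have "f (matpow A 0 *v x) > 0" using xn by (simp add: NT_def f_def)
    then have h0: "u + v > 0" using fk[of 0 c1 c2] x by (simp add: u_def v_def)
    have "f (matpow A 1 *v x) > 0" using xn by (simp add: NT_def f_def)
    then have h1: "u * l1 + v * l2 > 0" using fk[of 1 c1 c2] x by (simp add: u_def v_def)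
    define w where "w = 1 / (U * (l1 - l2))"
    define k1 where "k1 = (u * l1 + v * l2) * w"
    define k2 where "k2 = (- ((u+v)*l1*l2) * w)"
    have w: "w > 0" unfolding w_def using U a(1,2) by simp
    have k1: "k1 > 0" unfolding k1_def using h1 w by simp
    have "(u + v) * l1 * l2 < 0" using h0 a(1,2)
      by (simp add: mult_pos_neg)
    then have k2: "k2 > 0" unfolding k2_def using w by (simp add: mult_neg_pos)
    have a1: "a1 \<noteq> 0" using U by (auto simp: U_def)
    have S1: "k1 + k2 / l1 = u / U" and S2: "k1 + k2 / l2 = - v / U"
      unfolding k1_def k2_def using s12[OF _ a(1,2) w_def] U by auto
    have "k1 * a1 + k2 * (a1 / l1) = a1 * (k1 + k2 / l1)" by (simp add: algebra_simps)
    also have "\<dots> = a1 * (c1 * p / (a1 * p))" using S1 by (simp add: u_def U_def)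
    also have "\<dots> = c1" using a1 p by simp
    finally have e1: "c1 = k1 * a1 + k2 * (a1 / l1)" by simp
    have "k1 * a2 + k2 * (a2 / l2) = a2 * (k1 + k2 / l2)" by (simp add: algebra_simps)
    also have "\<dots> = c2 * (- (a2 * q)) / U" using S2 by (simp add: v_def algebra_simps)
    also have "\<dots> = c2" using aq U by simp
    finally have e2: "c2 = k1 * a2 + k2 * (a2 / l2)" by simp
    have "x = k1 *\<^sub>R \<alpha> + k2 *\<^sub>R y"
      unfolding y2 al x e1 e2 by (simp add: algebra_simps)
    then have "x = k1 *\<^sub>R \<alpha> + k2 *\<^sub>R (matrix_inv A *v \<alpha>)" using iy by simp
    then show "x \<in> {k1 *\<^sub>R \<alpha> + k2 *\<^sub>R (matrix_inv A *v \<alpha>) | k1 k2. k1 > 0 \<and> k2 > 0}"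
      using k1 k2 by blast
  next
    fix x assume "x \<in> {k1 *\<^sub>R \<alpha> + k2 *\<^sub>R (matrix_inv A *v \<alpha>) | k1 k2. k1 > 0 \<and> k2 > 0}"
    then obtain k1 k2 where k: "k1 > 0" "k2 > 0" and x: "x = k1 *\<^sub>R \<alpha> + k2 *\<^sub>R y"
      using iy by auto
    define c1 where "c1 = k1 * a1 + k2 * (a1 / l1)"
    define c2 where "c2 = k1 * a2 + k2 * (a2 / l2)"
    have xc: "x = c1 *\<^sub>R b1 + c2 *\<^sub>R b2"
      unfolding x al y2 c1_def c2_def by (simp add: algebra_simps)
    define u where "u = c1 * p"
    define v where "v = c2 * q"
    have u1: "u = U * (k1 + k2 / l1)"
      unfolding u_def c1_def U_def by (simp add: algebra_simps)
    have "v = (a2 * q) * (k1 + k2 / l2)"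
      unfolding v_def c2_def by (simp add: algebra_simps)
    then have v1: "v = - U * (k1 + k2 / l2)" using aq by simp
    have "u + v = U * (k2 / l1 - k2 / l2)" using u1 v1 by (simp add: algebra_simps)
    moreover have "k2 / l1 > 0" "k2 / l2 < 0" using k a(1,2) by (auto simp: divide_pos_neg)
    ultimately have h0: "u + v > 0" using U by simp
    have t1: "(k1 + k2 / l1) * l1 = k1 * l1 + k2" using a(1) by (simp add: distrib_right)
    have t2: "(k1 + k2 / l2) * l2 = k1 * l2 + k2" using a(2) by (simp add: distrib_right)
    have "u * l1 - v * m = U * ((k1 + k2 / l1) * l1) - U * ((k1 + k2 / l2) * l2)"
    proof -
      have g: "U * X * l1 - (- U * Y) * (- l2) = U * (X * l1) - U * (Y * l2)" for X Y
        by (simp add: algebra_simps)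
      show ?thesis unfolding u1 v1 m_def by (rule g)
    qed
    also have "\<dots> = U * (k1 * (l1 - l2))" unfolding t1 t2 by (simp add: algebra_simps)
    finally have "u * l1 - v * m = U * (k1 * (l1 - l2))" .
    then have h1: "u * l1 - v * m > 0" using U k a(1,2) by simp
    show "x \<in> NT A B"
      unfolding NT_def
    proof (safe)
      fix k
      have "u * l1 ^ k + v * (- m) ^ k > 0" using posk[OF a(1) m(1) m(2) h0 h1] .
      then show "(B *v (matpow A k *v x)) $ 1 > 0"
        using fk[of k c1 c2] xc by (simp add: f_def u_def v_def m_def)
    qed
  qed
qed

end
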